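(* Let $L>0$, $\beta\in(0,1]$ and $f:[0,L]\to\mathbb R$ with $f\in W^{1,\frac1{1-\beta}}(0,L)$ (with $\frac1{1-\beta}=\infty$ when $\beta=1$). Then: (1) if $f$ attains its maximum over $[0,L]$ at a point $x_0\in(0,L]$, then for every $\alpha\in(0,\beta)$, $(D^\alpha f)(x_0)\ge0$; furthermore, if $f$ is not constant on $[0,x_0]$, then $(D^\alpha f)(x_0)>0$; (2) if $f$ attains its minimum over $[0,L]$ at a point $x_0\in(0,L]$, then for every $\alpha\in(0,\beta)$, $(D^\alpha f)(x_0)\le0$; furthermore, if $f$ is not constant on $[0,x_0]$, then $(D^\alpha f)(x_0)<0$.
   Context: For $\alpha\in(0,1)$, the Caputo derivative is $D^{\alpha}f(x)=\frac{1}{\Gamma(1-\alpha)}\frac{d}{dx}\int_0^x(x-p)^{-\alpha}[f(p)-f(0)]\,dp$; for absolutely continuous $f$ this equals $\frac{1}{\Gamma(1-\alpha)}\int_0^x(x-p)^{-\alpha}f'(p)\,dp$. *)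

theory Defs
  imports "HOL-Analysis.Analysis"
begin

text \<open>Sobolev space W^{1,p}(0,L) with p = 1/(1-beta) (p = infinity when beta = 1),
  described through the (continuous representative of) f and a weak derivative g:
  g is in L^p(0,L) and f x = f 0 + integral of g over [0,x] for all x in [0,L].\<close>

definition sobolev_W1p_deriv ::
  "real \<Rightarrow> real \<Rightarrow> (real \<Rightarrow> real) \<Rightarrow> (real \<Rightarrow> real) \<Rightarrow> bool" where
  "sobolev_W1p_deriv L \<beta> f g \<longleftrightarrow>
     set_borel_measurable lborel {0..L} g \<and>
     (if \<beta> = 1 then (\<exists>C. AE x in lborel. x \<in> {0..L} \<longrightarrow> \<bar>g x\<bar> \<le> C)
      else set_integrable lborel {0..L} (\<lambda>x. \<bar>g x\<bar> powr (1 / (1 - \<beta>)))) \<and>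
     (\<forall>x\<in>{0..L}. f x = f 0 + (LINT t:{0..x}|lborel. g t))"

definition caputo :: "real \<Rightarrow> (real \<Rightarrow> real) \<Rightarrow> real \<Rightarrow> real" where
  "caputo \<alpha> g x = (1 / Gamma (1 - \<alpha>)) * (LINT p:{0..x}|lborel. (x - p) powr (- \<alpha>) * g p)"

end

theory Submission
  imports Defs
begin


lemma young_simple:
  fixes x y b :: real
  assumes "0 \<le> x" "0 \<le> y" "0 < b" "b < 1"
  shows "x * y \<le> x powr (1/b) + y powr (1/(1-b))"
proof -
  have "x * y \<le> x powr (1/b) / (1/b) + y powr (1/(1-b)) / (1/(1-b))"
    by (rule Youngs_inequality) (use assms in \<open>auto simp: field_simps\<close>)
  also have "\<dots> = b * x powr (1/b) + (1-b) * y powr (1/(1-b))" by simp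
  also have "\<dots> \<le> x powr (1/b) + y powr (1/(1-b))"
    using assms by (intro add_mono) (auto intro!: mult_left_le_one_le)
  finally show ?thesis .
qed

lemma powr_kernel_integrable:
  fixes a r :: real
  assumes "0 < a" "0 < r" "r < 1"
  shows "set_integrable lborel {0..<a} (\<lambda>p. (a - p) powr (- r))"
proof -
  have "(\<lambda>x. x powr (-r)) absolutely_integrable_on {0<..a}"
    by (rule nonnegative_absolutely_integrable_1[OF integrable_on_powr_from_0']) (use assms in auto)
  hence "integrable lborel (\<lambda>x. indicator {0<..a} x *\<^sub>R x powr (-r))"
    by (simp add: set_integrable_def absolutely_integrable_on_def)
       (subst (asm) integrable_completion; auto)
  hence "integrable lborel (\<lambda>x. (\<lambda>x. indicator {0<..a} x *\<^sub>R x powr (-r)) (a + (-1) * x))"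
    by (subst lborel_integrable_real_affine_iff) auto
  moreover have "\<And>x. indicator {0<..a} (a + (-1) * x) = (indicator {0..<a} x :: real)"
    by (auto simp: indicator_def)
  ultimately show ?thesis by (simp add: set_integrable_def)
qed



lemma weighted_integrable:
  fixes L \<beta> :: real and f g w :: "real \<Rightarrow> real" and A :: "real set"
  assumes sob: "sobolev_W1p_deriv L \<beta> f g" and b: "0 < \<beta>" "\<beta> \<le> 1"
    and A: "A \<in> sets lborel" "A \<subseteq> {0..L}"
    and w: "w \<in> borel_measurable lborel" "\<And>x. 0 \<le> w x"
    and wi: "set_integrable lborel A (\<lambda>x. w x powr (1/\<beta>))"
  shows "set_integrable lborel A (\<lambda>x. w x * g x)"
proof -
  have gm: "(\<lambda>x. indicator {0..L} x * g x) \<in> borel_measurable lborel"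
    using sob by (simp add: sobolev_W1p_deriv_def set_borel_measurable_def)
  have eq: "\<And>x. indicator A x *\<^sub>R (w x * g x) = indicator A x * w x * (indicator {0..L} x * g x)"
    using A(2) by (auto simp: indicator_def)
  have meas: "(\<lambda>x. indicator A x * w x * (indicator {0..L} x * g x)) \<in> borel_measurable lborel"
    using gm w(1) A(1) by measurable
  show ?thesis
  proof (cases "\<beta> = 1")
    case True
    then obtain C where C: "AE x in lborel. x \<in> {0..L} \<longrightarrow> \<bar>g x\<bar> \<le> C"
      using sob by (auto simp: sobolev_W1p_deriv_def)
    have wi1: "integrable lborel (\<lambda>x. indicator A x * w x)"
      using wi True w(2) by (simp add: set_integrable_def powr_one)
    show ?thesis unfolding set_integrable_def eq
    proof (rule Bochner_Integration.integrable_bound[OF integrable_mult_right[OF wi1, of "\<bar>C\<bar>"] meas])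
      show "AE x in lborel. norm (indicator A x * w x * (indicator {0..L} x * g x)) \<le> norm (\<bar>C\<bar> * (indicator A x * w x))"
        using C
      proof eventually_elim
        case (elim x)
        show ?case
        proof (cases "x \<in> A")
          case True
          hence "\<bar>g x\<bar> \<le> \<bar>C\<bar>" using elim A(2) by force
          moreover have "x \<in> {0..L}" using True A(2) by auto
          ultimately show ?thesis using True w(2)[of x]
            by (auto simp: abs_mult mult.commute[of "w x"] intro!: mult_right_mono)
        qed simp
      qed
    qed
  next
    case False
    with b have b1: "\<beta> < 1" by simp
    have gp: "set_integrable lborel A (\<lambda>x. \<bar>g x\<bar> powr (1 / (1 - \<beta>)))"
      using sob False A by (auto simp: sobolev_W1p_deriv_def intro: set_integrable_subset)
    have s: "integrable lborel (\<lambda>x. indicator A x * w x powr (1/\<beta>) + indicator A x * \<bar>g x\<bar> powr (1 / (1 - \<beta>)))"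
      using wi gp by (intro Bochner_Integration.integrable_add) (auto simp: set_integrable_def)
    show ?thesis unfolding set_integrable_def eq
    proof (rule Bochner_Integration.integrable_bound[OF s meas], rule AE_I2)
      fix x
      have "w x * \<bar>g x\<bar> \<le> w x powr (1/\<beta>) + \<bar>g x\<bar> powr (1 / (1 - \<beta>))"
        by (rule young_simple) (use w(2) b b1 in auto)
      moreover have "0 \<le> w x powr (1/\<beta>) + \<bar>g x\<bar> powr (1 / (1 - \<beta>))" by simp
      ultimately show "norm (indicator A x * w x * (indicator {0..L} x * g x))
          \<le> norm (indicator A x * w x powr (1/\<beta>) + indicator A x * \<bar>g x\<bar> powr (1 / (1 - \<beta>)))"
        using A(2) w(2)[of x] by (auto simp: indicator_def abs_mult)
    qed
  qed
qed



lemma kernel_FTC: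
  fixes a \<alpha> p :: real
  assumes "0 < \<alpha>" "0 \<le> p" "p < a"
  shows "integral\<^sup>L lborel (\<lambda>s. indicator {0..p} s *\<^sub>R (\<alpha> * (a - s) powr (-\<alpha>-1)))
         = (a-p) powr (-\<alpha>) - a powr (-\<alpha>)"
proof -
  have "integral\<^sup>L lborel (\<lambda>s. indicator {0..p} s *\<^sub>R (\<alpha> * (a - s) powr (-\<alpha>-1)))
      = (\<lambda>s. (a-s) powr (-\<alpha>)) p - (\<lambda>s. (a-s) powr (-\<alpha>)) 0"
  proof (rule integral_FTC_atLeastAtMost)
    fix x assume x: "0 \<le> x" "x \<le> p"
    have "((\<lambda>s. (a-s) powr (-\<alpha>)) has_real_derivative (\<alpha> * (a - x) powr (-\<alpha>-1))) (at x)"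
      using x assms
      by (auto intro!: derivative_eq_intros simp: powr_diff field_simps)
    thus "((\<lambda>s. (a-s) powr (-\<alpha>)) has_vector_derivative (\<alpha> * (a - x) powr (-\<alpha>-1))) (at x within {0..p})"
      by (simp add: has_real_derivative_iff_has_vector_derivative has_vector_derivative_at_within)
  next
    show "continuous_on {0..p} (\<lambda>s. \<alpha> * (a - s) powr (- \<alpha> - 1))"
      using assms by (intro continuous_intros) auto
  qed (use assms in auto)
  thus ?thesis by simp
qed



lemma caputo_identity:
  fixes L \<beta> a \<alpha> :: real and f g :: "real \<Rightarrow> real"
  assumes sob: "sobolev_W1p_deriv L \<beta> f g" and b: "0 < \<beta>" "\<beta> \<le> 1"
    and a: "0 < a" "a \<le> L" and al: "0 < \<alpha>" "\<alpha> < \<beta>"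
  shows "integrable lborel (\<lambda>s. indicator {0..<a} s * (\<alpha> * (a - s) powr (-\<alpha>-1) * (f a - f s)))"
    and "(LINT p:{0..a}|lborel. (a-p) powr (-\<alpha>) * g p) = a powr (-\<alpha>) * (f a - f 0)
          + (\<integral>s. indicator {0..<a} s * (\<alpha> * (a - s) powr (-\<alpha>-1) * (f a - f s)) \<partial>lborel)"
proof -
  define k where "k s = \<alpha> * (a - s) powr (-\<alpha>-1)" for s
  have gm: "(\<lambda>x. indicator {0..L} x * g x) \<in> borel_measurable lborel"
    using sob by (simp add: sobolev_W1p_deriv_def set_borel_measurable_def)
  have fx: "\<And>x. x \<in> {0..L} \<Longrightarrow> f x = f 0 + (LINT t:{0..x}|lborel. g t)"
    using sob unfolding sobolev_W1p_deriv_def by blast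
  have gi: "set_integrable lborel {0..L} g"
  proof -
    have "set_integrable lborel {0..L} (\<lambda>x. (\<lambda>_. 1) x * g x)"
      by (rule weighted_integrable[OF sob b]) (auto intro!: borel_integrable_atLeastAtMost' continuous_intros)
    thus ?thesis by simp
  qed
  have hi: "set_integrable lborel {0..<a} (\<lambda>p. (a-p) powr (-\<alpha>) * g p)"
  proof (rule weighted_integrable[OF sob b])
    have "set_integrable lborel {0..<a} (\<lambda>p. (a - p) powr (- (\<alpha>/\<beta>)))"
      by (rule powr_kernel_integrable) (use a al b in auto)
    thus "set_integrable lborel {0..<a} (\<lambda>x. ((a - x) powr - \<alpha>) powr (1 / \<beta>))"
      by (simp add: powr_powr)
  qed (use a in auto)
  have gsub: "set_integrable lborel A g" if "A \<in> sets lborel" "A \<subseteq> {0..L}" for A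
    using set_integrable_subset[OF gi that] .
  have gsub': "integrable lborel (\<lambda>x. indicator A x * g x)" if "A \<in> sets lborel" "A \<subseteq> {0..L}" for A
    using gsub[OF that] by (simp add: set_integrable_def)
  have fdiff: "(\<integral>p. indicator {s..<a} p * g p \<partial>lborel) = f a - f s" if s: "0 \<le> s" "s \<le> a" for s
  proof -
    have i1: "integrable lborel (\<lambda>x. indicator {0..s} x * g x)" by (rule gsub') (use s a in auto)
    have i2: "integrable lborel (\<lambda>x. indicator {s..<a} x * g x)" by (rule gsub') (use s a in auto)
    have i3: "integrable lborel (\<lambda>x. indicator {0..a} x * g x)" by (rule gsub') (use s a in auto)
    have "f a - f s = (LINT t:{0..a}|lborel. g t) - (LINT t:{0..s}|lborel. g t)"
      using fx[of a] fx[of s] s a by auto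
    also have "(LINT t:{0..a}|lborel. g t) = (\<integral>p. indicator {0..s} p * g p + indicator {s..<a} p * g p \<partial>lborel)"
      unfolding set_lebesgue_integral_def
    proof (rule integral_cong_AE)
      show "AE x in lborel. indicator {0..a} x *\<^sub>R g x = indicator {0..s} x * g x + indicator {s..<a} x * g x"
        using AE_lborel_singleton[of s] AE_lborel_singleton[of a]
        by eventually_elim (use s in \<open>auto simp: indicator_def\<close>)
      show "(\<lambda>x. indicator {0..a} x *\<^sub>R g x) \<in> borel_measurable lborel"
        using borel_measurable_integrable[OF i3] by simp
      show "(\<lambda>x. indicator {0..s} x * g x + indicator {s..<a} x * g x) \<in> borel_measurable lborel"
        using borel_measurable_integrable[OF Bochner_Integration.integrable_add[OF i1 i2]] by simp
    qed
    also have "\<dots> = (\<integral>p. indicator {0..s} p * g p \<partial>lborel) + (\<integral>p. indicator {s..<a} p * g p \<partial>lborel)"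
      by (rule Bochner_Integration.integral_add[OF i1 i2])
    finally show ?thesis by (simp add: set_lebesgue_integral_def)
  qed
  define G where "G p = indicator {0..<a} p * g p" for p
  have Gi: "integrable lborel G"
    unfolding G_def by (rule gsub') (use a in auto)
  have Gm[measurable]: "G \<in> borel_measurable lborel" using Gi by auto
  have km[measurable]: "k \<in> borel_measurable lborel" unfolding k_def by measurable
  define \<Phi> where "\<Phi> p s = (if 0 \<le> s \<and> s \<le> p then k s * G p else 0)" for p s
  have \<Phi>m: "(\<lambda>(p,s). \<Phi> p s) \<in> borel_measurable (lborel \<Otimes>\<^sub>M lborel)"
    unfolding \<Phi>_def by measurable
  have kint: "integrable lborel (\<lambda>s. indicator {0..p} s * k s)" if "p < a" for p
  proof -
    have "set_integrable lborel {0..p} k"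
      unfolding k_def by (rule borel_integrable_atLeastAtMost') (use that in \<open>auto intro!: continuous_intros\<close>)
    thus ?thesis by (simp add: set_integrable_def)
  qed
  have kFTC: "(\<integral>s. indicator {0..p} s * k s \<partial>lborel) = (a-p) powr (-\<alpha>) - a powr (-\<alpha>)"
    if "0 \<le> p" "p < a" for p
    using kernel_FTC[OF al(1) that] by (simp add: k_def)
  have knn: "0 \<le> k s" for s unfolding k_def using al by simp
  have \<Phi>p: "\<Phi> p = (\<lambda>s. G p * (indicator {0..p} s * k s))" if "0 \<le> p" "p < a" for p
    using that by (auto simp: \<Phi>_def indicator_def fun_eq_iff)
  have \<Phi>p0: "\<Phi> p = (\<lambda>s. 0)" if "\<not> (0 \<le> p \<and> p < a)" for p
    using that by (auto simp: \<Phi>_def G_def fun_eq_iff)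
  have \<Phi>abs: "(\<lambda>s. norm (\<Phi> p s)) = (\<lambda>s. \<bar>G p\<bar> * (indicator {0..p} s * k s))" for p
    using knn by (auto simp: \<Phi>_def indicator_def fun_eq_iff abs_mult)
  have int_s: "integrable lborel (\<Phi> p)" for p
    by (cases "0 \<le> p \<and> p < a") (auto simp: \<Phi>p \<Phi>p0 kint)
  have I_s: "(\<integral>s. \<Phi> p s \<partial>lborel) = G p * ((a-p) powr (-\<alpha>) - a powr (-\<alpha>))" for p
    by (cases "0 \<le> p \<and> p < a") (auto simp: \<Phi>p \<Phi>p0 kFTC G_def)
  have I_s_abs: "(\<integral>s. norm (\<Phi> p s) \<partial>lborel) = \<bar>G p\<bar> * ((a-p) powr (-\<alpha>) - a powr (-\<alpha>))" for p
    unfolding \<Phi>abs by (cases "0 \<le> p \<and> p < a") (auto simp: kFTC G_def)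
  have hi': "integrable lborel (\<lambda>p. indicator {0..<a} p * ((a-p) powr (-\<alpha>) * g p))"
    using hi by (simp add: set_integrable_def)
  have eqa: "(\<lambda>p. \<bar>G p\<bar> * ((a-p) powr (-\<alpha>) - a powr (-\<alpha>)))
      = (\<lambda>p. \<bar>indicator {0..<a} p * ((a-p) powr (-\<alpha>) * g p)\<bar> - a powr (-\<alpha>) * \<bar>G p\<bar>)"
    by (auto simp: fun_eq_iff G_def abs_mult algebra_simps indicator_def)
  have int_outer_abs: "integrable lborel (\<lambda>p. \<integral>s. norm (\<Phi> p s) \<partial>lborel)"
    unfolding I_s_abs eqa
    by (intro Bochner_Integration.integrable_diff integrable_abs hi' integrable_mult_right Gi)
  have int_prod: "integrable (lborel \<Otimes>\<^sub>M lborel) (\<lambda>(p,s). \<Phi> p s)"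
  proof (rule lborel_pair.Fubini_integrable)
    show "(\<lambda>(p,s). \<Phi> p s) \<in> borel_measurable (lborel \<Otimes>\<^sub>M lborel)" by (rule \<Phi>m)
    show "integrable lborel (\<lambda>x. \<integral>y. norm (case (x, y) of (p, s) \<Rightarrow> \<Phi> p s) \<partial>lborel)"
      using int_outer_abs by simp
    show "AE x in lborel. integrable lborel (\<lambda>y. case (x, y) of (p, s) \<Rightarrow> \<Phi> p s)"
      using int_s by simp
  qed
  have fub: "(\<integral>s. (\<integral>p. \<Phi> p s \<partial>lborel) \<partial>lborel) = (\<integral>p. (\<integral>s. \<Phi> p s \<partial>lborel) \<partial>lborel)"
    by (rule lborel_pair.Fubini_integral[OF int_prod])
  have int_snd: "integrable lborel (\<lambda>s. \<integral>p. \<Phi> p s \<partial>lborel)"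
    by (rule lborel_pair.integrable_snd[OF int_prod])
  have I_p: "(\<integral>p. \<Phi> p s \<partial>lborel) = indicator {0..<a} s * (k s * (f a - f s))" for s
  proof (cases "0 \<le> s \<and> s < a")
    case True
    hence "(\<lambda>p. \<Phi> p s) = (\<lambda>p. k s * (indicator {s..<a} p * g p))"
      by (auto simp: \<Phi>_def G_def indicator_def fun_eq_iff)
    thus ?thesis using True fdiff[of s] by simp
  next
    case False
    hence "(\<lambda>p. \<Phi> p s) = (\<lambda>p. 0)"
      by (auto simp: \<Phi>_def G_def indicator_def fun_eq_iff)
    thus ?thesis using False by simp
  qed
  show "integrable lborel (\<lambda>s. indicator {0..<a} s * (\<alpha> * (a - s) powr (-\<alpha>-1) * (f a - f s)))"
    using int_snd unfolding I_p k_def by (simp add: mult.assoc)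
  have eqb: "(\<lambda>p. G p * ((a-p) powr (-\<alpha>) - a powr (-\<alpha>)))
      = (\<lambda>p. indicator {0..<a} p * ((a-p) powr (-\<alpha>) * g p) - a powr (-\<alpha>) * G p)"
    by (auto simp: fun_eq_iff G_def algebra_simps indicator_def)
  have "(\<integral>p. (\<integral>s. \<Phi> p s \<partial>lborel) \<partial>lborel)
      = (\<integral>p. indicator {0..<a} p * ((a-p) powr (-\<alpha>) * g p) \<partial>lborel) - a powr (-\<alpha>) * (\<integral>p. G p \<partial>lborel)"
    unfolding I_s eqb
    by (subst Bochner_Integration.integral_diff) (auto intro!: hi' Gi)
  also have "(\<integral>p. G p \<partial>lborel) = f a - f 0"
    using fdiff[of 0] a by (simp add: G_def)
  also have "(\<integral>p. indicator {0..<a} p * ((a-p) powr (-\<alpha>) * g p) \<partial>lborel)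
       = (LINT p:{0..a}|lborel. (a-p) powr (-\<alpha>) * g p)"
    unfolding set_lebesgue_integral_def
  proof (rule integral_cong_AE)
    show "AE x in lborel. indicator {0..<a} x * ((a-x) powr (-\<alpha>) * g x) = indicator {0..a} x *\<^sub>R ((a-x) powr (-\<alpha>) * g x)"
      using AE_lborel_singleton[of a]
      by eventually_elim (auto simp: indicator_def)
    show "(\<lambda>x. indicator {0..<a} x * ((a-x) powr (-\<alpha>) * g x)) \<in> borel_measurable lborel"
      using borel_measurable_integrable[OF hi'] by simp
    have "(\<lambda>x. indicator {0..a} x *\<^sub>R ((a-x) powr (-\<alpha>) * g x)) = (\<lambda>x. indicator {0..a} x * (a-x) powr (-\<alpha>) * (indicator {0..L} x * g x))"
      using a by (auto simp: fun_eq_iff indicator_def)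
    also have "\<dots> \<in> borel_measurable lborel" using gm by measurable
    finally show "(\<lambda>x. indicator {0..a} x *\<^sub>R ((a-x) powr (-\<alpha>) * g x)) \<in> borel_measurable lborel" .
  qed
  finally have "(\<integral>p. (\<integral>s. \<Phi> p s \<partial>lborel) \<partial>lborel)
     = (LINT p:{0..a}|lborel. (a-p) powr (-\<alpha>) * g p) - a powr (-\<alpha>) * (f a - f 0)" .
  moreover have "(\<integral>s. (\<integral>p. \<Phi> p s \<partial>lborel) \<partial>lborel)
     = (\<integral>s. indicator {0..<a} s * (\<alpha> * (a - s) powr (-\<alpha>-1) * (f a - f s)) \<partial>lborel)"
    unfolding I_p k_def by (simp add: mult.assoc)
  ultimately show "(LINT p:{0..a}|lborel. (a-p) powr (-\<alpha>) * g p) = a powr (-\<alpha>) * (f a - f 0)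
          + (\<integral>s. indicator {0..<a} s * (\<alpha> * (a - s) powr (-\<alpha>-1) * (f a - f s)) \<partial>lborel)"
    using fub by simp
qed



lemma sob_continuous:
  fixes L \<beta> a :: real and f g :: "real \<Rightarrow> real"
  assumes sob: "sobolev_W1p_deriv L \<beta> f g" and b: "0 < \<beta>" "\<beta> \<le> 1" and a: "0 \<le> a" "a \<le> L"
  shows "continuous_on {0..a} f"
proof -
  have gi: "set_integrable lborel {0..L} g"
  proof -
    have "set_integrable lborel {0..L} (\<lambda>x. (\<lambda>_. 1) x * g x)"
      by (rule weighted_integrable[OF sob b]) (auto intro!: borel_integrable_atLeastAtMost' continuous_intros)
    thus ?thesis by simp
  qed
  have gs: "set_integrable lborel {0..y} g" if "y \<le> L" for y
    by (rule set_integrable_subset[OF gi]) (use that in auto)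
  have "continuous_on {0..a} (\<lambda>y. f 0 + integral {0..y} g)"
    by (intro continuous_intros indefinite_integral_continuous_1 set_borel_integral_eq_integral(1)[OF gs])
       (use a in auto)
  moreover have "f y = f 0 + integral {0..y} g" if "y \<in> {0..a}" for y
  proof -
    have all: "\<forall>x\<in>{0..L}. f x = f 0 + (LINT t:{0..x}|lborel. g t)"
      using sob unfolding sobolev_W1p_deriv_def by blast
    have "y \<in> {0..L}" using that a by auto
    with all have "f y = f 0 + (LINT t:{0..y}|lborel. g t)" by (rule bspec)
    also have "(LINT t:{0..y}|lborel. g t) = integral {0..y} g"
      using set_borel_integral_eq_integral(2)[OF gs[of y]] that a by auto
    finally show ?thesis .
  qed
  ultimately show ?thesis using continuous_on_cong by (metis (no_types, lifting))
qed

lemma max_case: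
  fixes L \<beta> a \<alpha> :: real and f g :: "real \<Rightarrow> real"
  assumes sob: "sobolev_W1p_deriv L \<beta> f g" and b: "0 < \<beta>" "\<beta> \<le> 1"
    and a: "0 < a" "a \<le> L" and al: "0 < \<alpha>" "\<alpha> < \<beta>"
    and mx: "\<forall>x\<in>{0..L}. f x \<le> f a"
  shows "0 \<le> caputo \<alpha> g a \<and> ((\<exists>x\<in>{0..a}. f x \<noteq> f a) \<longrightarrow> 0 < caputo \<alpha> g a)"
proof -
  define J where "J = (\<integral>s. indicator {0..<a} s * (\<alpha> * (a - s) powr (-\<alpha>-1) * (f a - f s)) \<partial>lborel)"
  note Jint = caputo_identity(1)[OF sob b a al]
  have cap: "caputo \<alpha> g a = (1 / Gamma (1 - \<alpha>)) * (a powr (-\<alpha>) * (f a - f 0) + J)"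
    unfolding caputo_def J_def caputo_identity(2)[OF sob b a al] ..
  have Gp: "0 < Gamma (1 - \<alpha>)" using al b by simp
  have pw: "0 \<le> indicator {0..<a} s * (\<alpha> * (a - s) powr (-\<alpha>-1) * (f a - f s))" for s
    using mx a al by (auto simp: indicator_def)
  have J0: "0 \<le> J" unfolding J_def by (rule integral_nonneg_AE) (use pw in auto)
  have f0: "0 \<le> a powr (-\<alpha>) * (f a - f 0)" using mx a by auto
  have main: "0 \<le> caputo \<alpha> g a" unfolding cap using Gp J0 f0 by simp
  have strict: "0 < caputo \<alpha> g a" if ex: "\<exists>x\<in>{0..a}. f x \<noteq> f a"
  proof -
    obtain x where x: "x \<in> {0..a}" "f x \<noteq> f a" using ex by blast
    have fxa: "f x < f a" using x mx a by force
    hence xa: "x < a" using x by (cases "x = a") auto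
    define \<epsilon> where "\<epsilon> = (f a - f x) / 2"
    have \<epsilon>: "0 < \<epsilon>" using fxa by (simp add: \<epsilon>_def)
    have cont: "continuous_on {0..a} f" by (rule sob_continuous[OF sob b]) (use a in auto)
    obtain d where d: "d > 0" "\<And>y. y \<in> {0..a} \<Longrightarrow> dist y x < d \<Longrightarrow> dist (f y) (f x) < \<epsilon>"
      using cont x(1) \<epsilon> unfolding continuous_on_iff by metis
    define \<eta> where "\<eta> = min (d/2) ((a-x)/2)"
    have \<eta>: "0 < \<eta>" "\<eta> < d" "x + \<eta> < a" using d(1) xa unfolding \<eta>_def by (auto simp: min_def field_simps)
    define c where "c = \<alpha> * a powr (-\<alpha>-1)"
    have c: "0 < c" using al a by (simp add: c_def)
    have lb: "indicator {x..x+\<eta>} s * (c * \<epsilon>) \<le> indicator {0..<a} s * (\<alpha> * (a - s) powr (-\<alpha>-1) * (f a - f s))" for s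
    proof (cases "s \<in> {x..x+\<eta>}")
      case True
      hence s: "0 \<le> s" "s < a" "dist s x < d" using x \<eta> by (auto simp: dist_real_def)
      have "dist (f s) (f x) < \<epsilon>" using d(2)[of s] s by auto
      hence "\<bar>f s - f x\<bar> < \<epsilon>" by (simp only: dist_real_def)
      hence fs: "\<epsilon> \<le> f a - f s" unfolding \<epsilon>_def abs_less_iff by (smt (verit) field_sum_of_halves)
      have "a powr (-\<alpha>-1) \<le> (a - s) powr (-\<alpha>-1)"
        by (rule powr_mono2') (use s al in auto)
      hence ks: "c \<le> \<alpha> * (a - s) powr (-\<alpha>-1)" using al by (simp add: c_def)
      have "c * \<epsilon> \<le> \<alpha> * (a - s) powr (-\<alpha>-1) * (f a - f s)"
        by (rule mult_mono[OF ks fs]) (use c \<epsilon> al in auto)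
      thus ?thesis using True s by simp
    next
      case False
      thus ?thesis using pw[of s] by simp
    qed
    have "(\<integral>s. indicator {x..x+\<eta>} s * (c * \<epsilon>) \<partial>lborel) \<le> J"
      unfolding J_def
      by (rule integral_mono[OF _ Jint lb])
         (use borel_integrable_atLeastAtMost[of x "x+\<eta>" "\<lambda>_. c*\<epsilon>"] in \<open>simp add: mult.commute\<close>)
    moreover have "(\<integral>s. indicator {x..x+\<eta>} s * (c * \<epsilon>) \<partial>lborel) = \<eta> * (c * \<epsilon>)"
      using \<eta> by simp
    ultimately have "0 < J" using \<eta> c \<epsilon> by (smt (verit) mult_pos_pos)
    thus ?thesis unfolding cap using Gp f0 by simp
  qed
  show ?thesis using main strict by blast
qed



lemma sob_neg:
  assumes "sobolev_W1p_deriv L \<beta> f g"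
  shows "sobolev_W1p_deriv L \<beta> (\<lambda>x. - f x) (\<lambda>x. - g x)"
proof -
  have m: "(\<lambda>x. indicator {0..L} x *\<^sub>R g x) \<in> borel_measurable lborel"
    using assms by (simp add: sobolev_W1p_deriv_def set_borel_measurable_def)
  have "(\<lambda>x. indicator {0..L} x *\<^sub>R (- g x)) = (\<lambda>x. - (indicator {0..L} x *\<^sub>R g x))" by auto
  hence m': "set_borel_measurable lborel {0..L} (\<lambda>x. - g x)"
    using m by (simp add: set_borel_measurable_def)
  have i: "\<forall>x\<in>{0..L}. f x = f 0 + (LINT t:{0..x}|lborel. g t)"
    using assms unfolding sobolev_W1p_deriv_def by blast
  have i': "\<forall>x\<in>{0..L}. - f x = - f 0 + (LINT t:{0..x}|lborel. - g t)"
  proof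
    fix x assume "x \<in> {0..L}"
    hence "f x = f 0 + (LINT t:{0..x}|lborel. g t)" using i by blast
    moreover have "(LINT t:{0..x}|lborel. - g t) = - (LINT t:{0..x}|lborel. g t)"
      by (simp add: set_lebesgue_integral_def)
    ultimately show "- f x = - f 0 + (LINT t:{0..x}|lborel. - g t)" by linarith
  qed
  have c: "if \<beta> = 1 then (\<exists>C. AE x in lborel. x \<in> {0..L} \<longrightarrow> \<bar>g x\<bar> \<le> C)
      else set_integrable lborel {0..L} (\<lambda>x. \<bar>g x\<bar> powr (1 / (1 - \<beta>)))"
    using assms unfolding sobolev_W1p_deriv_def by blast
  show ?thesis unfolding sobolev_W1p_deriv_def abs_minus_cancel using m' i' c by blast
qed

lemma caputo_neg: "caputo \<alpha> (\<lambda>x. - g x) a = - caputo \<alpha> g a"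
  by (simp add: caputo_def set_lebesgue_integral_def)

theorem lemma6:
  fixes L \<beta> x0 :: real and f g :: "real \<Rightarrow> real"
  assumes "L > 0" and "0 < \<beta>" and "\<beta> \<le> 1"
    and "sobolev_W1p_deriv L \<beta> f g"
    and "x0 \<in> {0<..L}"
  shows "((\<forall>x\<in>{0..L}. f x \<le> f x0) \<longrightarrow>
            (\<forall>\<alpha>. 0 < \<alpha> \<and> \<alpha> < \<beta> \<longrightarrow>
               caputo \<alpha> g x0 \<ge> 0 \<and>
               ((\<exists>x\<in>{0..x0}. f x \<noteq> f x0) \<longrightarrow> caputo \<alpha> g x0 > 0)))
       \<and> ((\<forall>x\<in>{0..L}. f x0 \<le> f x) \<longrightarrow>
            (\<forall>\<alpha>. 0 < \<alpha> \<and> \<alpha> < \<beta> \<longrightarrow>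
               caputo \<alpha> g x0 \<le> 0 \<and>
               ((\<exists>x\<in>{0..x0}. f x \<noteq> f x0) \<longrightarrow> caputo \<alpha> g x0 < 0)))"
proof (rule conjI; intro impI allI)
  fix \<alpha> assume mx: "\<forall>x\<in>{0..L}. f x \<le> f x0" and al: "0 < \<alpha> \<and> \<alpha> < \<beta>"
  show "0 \<le> caputo \<alpha> g x0 \<and> ((\<exists>x\<in>{0..x0}. f x \<noteq> f x0) \<longrightarrow> 0 < caputo \<alpha> g x0)"
    by (rule max_case[OF assms(4) assms(2,3)]) (use assms(5) al mx in auto)
next
  fix \<alpha> assume mn: "\<forall>x\<in>{0..L}. f x0 \<le> f x" and al: "0 < \<alpha> \<and> \<alpha> < \<beta>"
  have "0 \<le> caputo \<alpha> (\<lambda>x. - g x) x0 \<and> ((\<exists>x\<in>{0..x0}. - f x \<noteq> - f x0) \<longrightarrow> 0 < caputo \<alpha> (\<lambda>x. - g x) x0)"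
    by (rule max_case[OF sob_neg[OF assms(4)] assms(2,3)]) (use assms(5) al mn in auto)
  thus "caputo \<alpha> g x0 \<le> 0 \<and> ((\<exists>x\<in>{0..x0}. f x \<noteq> f x0) \<longrightarrow> caputo \<alpha> g x0 < 0)"
    by (simp add: caputo_neg)
qed

end
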